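(* Let $\Omega$ be a countably infinite set and $G$ a subgroup of $S=\mathrm{Sym}(\Omega)$. Suppose there exist two sequences $(\alpha_i)_{i\in\omega},(\beta_i)_{i\in\omega}$ of elements of $\Omega$, all of the elements $\alpha_i,\beta_i$ being distinct, such that for every $(\gamma_i)\in\prod_{i\in\omega}\{\alpha_i,\beta_i\}$ there exists $g\in G$ with $\gamma_i=\alpha_ig$ for all $i$. Then $S_{(A_0)}\preccurlyeq G$, where $A_0$ is a partition of $\Omega$ having infinitely many $1$-element members, infinitely many $2$-element members, and no other members.
   Context: $\mathrm{Sym}(\Omega)$ is the group of all permutations of $\Omega$, acting on the right. For a partition $A$ of $\Omega$, $S_{(A)}=\{f\in S:\Sigma f=\Sigma\ \forall\Sigma\in A\}$ (such $A_0$ is unique up to a permutation of $\Omega$, so $S_{(A_0)}$ is determined up to conjugacy). For subgroups $G_1,G_2\le S$, $G_1\preccurlyeq G_2$ means there is a finite $U\subseteq S$ with $G_1\le\langle G_2\cup U\rangle$. *)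

theory Defs
  imports Main "HOL-Library.Countable" "HOL-Library.Disjoint_Sets"
begin

text \<open>Omega is the (countably infinite) universe of the type 'a. A permutation of Omega
is a bijection 'a => 'a; the image of a point x under g is written g x (the paper's x g).\<close>

definition Sym :: "('a \<Rightarrow> 'a) set" where
  "Sym = {f. bij f}"

definition is_subgroup :: "('a \<Rightarrow> 'a) set \<Rightarrow> bool" where
  "is_subgroup H \<longleftrightarrow> H \<subseteq> Sym \<and> id \<in> H \<and>
     (\<forall>f\<in>H. \<forall>g\<in>H. f \<circ> g \<in> H) \<and> (\<forall>f\<in>H. inv f \<in> H)"

definition gen :: "('a \<Rightarrow> 'a) set \<Rightarrow> ('a \<Rightarrow> 'a) set" where
  "gen X = \<Inter>{H. is_subgroup H \<and> X \<subseteq> H}"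

definition preceq :: "('a \<Rightarrow> 'a) set \<Rightarrow> ('a \<Rightarrow> 'a) set \<Rightarrow> bool" where
  "preceq G1 G2 \<longleftrightarrow> (\<exists>U. finite U \<and> U \<subseteq> Sym \<and> G1 \<subseteq> gen (G2 \<union> U))"

definition stab_part :: "'a set set \<Rightarrow> ('a \<Rightarrow> 'a) set" where
  "stab_part A = {f \<in> Sym. \<forall>X\<in>A. f ` X = X}"

end

theory Submission imports Defs "HOL-Library.Countable_Set" begin

lemma ext_perm:
  fixes q h :: "'b \<Rightarrow> 'a::countable"
  assumes "inj q" "inj h" "infinite (- range q)" "infinite (- range h)"
  shows "\<exists>\<sigma>. bij \<sigma> \<and> (\<forall>b. \<sigma> (q b) = h b)"
proof -
  obtain e1 :: "'a \<Rightarrow> nat" where e1: "bij_betw e1 (- range q) UNIV"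
    using countableE_infinite[OF countableI_type assms(3)] by blast
  obtain e2 :: "'a \<Rightarrow> nat" where e2: "bij_betw e2 (- range h) UNIV"
    using countableE_infinite[OF countableI_type assms(4)] by blast
  define \<sigma> where "\<sigma> x = (if x \<in> range q then h (inv q x) else inv_into (- range h) e2 (e1 x))" for x
  have b1: "bij_betw \<sigma> (range q) (range h)"
  proof -
    have "bij_betw (h \<circ> inv q) (range q) (range h)"
      by (metis assms(1,2) bij_betw_comp_iff bij_betw_imageI bij_betw_inv_into inj_on_imp_bij_betw
          image_comp inv_into_image_cancel subset_UNIV)
    then show ?thesis by (rule bij_betw_cong[THEN iffD1, rotated]) (auto simp: \<sigma>_def)
  qed
  have b2: "bij_betw \<sigma> (- range q) (- range h)"
  proof -
    have "bij_betw (inv_into (- range h) e2 \<circ> e1) (- range q) (- range h)"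
      using e1 e2 bij_betw_inv_into bij_betw_trans by blast
    then show ?thesis by (rule bij_betw_cong[THEN iffD1, rotated]) (auto simp: \<sigma>_def)
  qed
  have "bij_betw \<sigma> (range q \<union> - range q) (range h \<union> - range h)"
    by (rule bij_betw_combine[OF b1 b2]) auto
  then have "bij \<sigma>" by simp
  moreover have "\<sigma> (q b) = h b" for b using assms(1) by (simp add: \<sigma>_def)
  ultimately show ?thesis by blast
qed

lemma swap_perm:
  fixes q :: "'b \<Rightarrow> 'a" and \<phi> :: "'b \<Rightarrow> 'b"
  assumes "inj q" "\<And>b. \<phi> (\<phi> b) = b"
  defines "P \<equiv> \<lambda>x. if x \<in> range q then q (\<phi> (inv q x)) else x"
  shows "bij P" "\<And>b. P (q b) = q (\<phi> b)" "\<And>x. x \<notin> range q \<Longrightarrow> P x = x"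
proof -
  show pq: "\<And>b. P (q b) = q (\<phi> b)" using assms by (simp add: P_def)
  show "\<And>x. x \<notin> range q \<Longrightarrow> P x = x" by (simp add: P_def)
  have "P \<circ> P = id"
  proof
    fix x show "(P \<circ> P) x = id x"
    proof (cases "x \<in> range q")
      case True then obtain b where "x = q b" by blast
      then show ?thesis using pq assms(2) by simp
    qed (simp add: P_def)
  qed
  then show "bij P" using o_bij by blast
qed

lemma subgroup_closed:
  assumes "is_subgroup H" "f \<in> H" "g \<in> H"
  shows "f \<circ> g \<in> H" "inv f \<in> H"
  using assms unfolding is_subgroup_def by auto

lemma Sym_bij: "f \<in> Sym \<Longrightarrow> bij f" by (simp add: Sym_def)

lemma Y_char:
  fixes g u :: "'a \<Rightarrow> 'a" and \<alpha> \<beta> :: "nat \<Rightarrow> 'a" and idx :: "nat \<times> nat \<times> bool \<Rightarrow> nat"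
  assumes bg: "bij g" and ia: "inj \<alpha>" and ib: "inj \<beta>" and ab: "\<And>i j. \<alpha> i \<noteq> \<beta> j" and ii: "inj idx"
  and gd: "\<And>k m e. g (\<alpha> (idx (k,m,e))) = (if k \<in> J then \<beta> (idx (k,m,e)) else \<alpha> (idx (k,m,e)))"
  and u1: "\<And>k m e. u (\<alpha> (idx (k,m,e))) = \<alpha> (idx (k,m,\<not>e))"
  and u2: "\<And>x. x \<notin> range (\<alpha> \<circ> idx) \<Longrightarrow> u x = x"
  shows "(g \<circ> u \<circ> inv g \<circ> u) (\<alpha> (idx (k,m,e))) = \<alpha> (idx (k,m, if k \<in> J then \<not>e else e))"
    "(g \<circ> u \<circ> inv g \<circ> u) (\<beta> (idx (k,m,e))) = \<beta> (idx (k,m, if k \<in> J then \<not>e else e))"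
    "x \<notin> range (\<alpha> \<circ> idx) \<union> range (\<beta> \<circ> idx) \<Longrightarrow> (g \<circ> u \<circ> inv g \<circ> u) x = x"
proof -
  have gi: "g (inv g z) = z" for z using bg by (simp add: bij_is_surj surj_f_inv_f)
  have ig: "inv g (g z) = z" for z using bg by (simp add: bij_is_inj)
  have key: "u (inv g z) = inv g z" if "\<forall>t. z \<noteq> g (\<alpha> (idx t))" for z
  proof (rule u2)
    show "inv g z \<notin> range (\<alpha> \<circ> idx)"
    proof
      assume "inv g z \<in> range (\<alpha> \<circ> idx)"
      then obtain t where "inv g z = \<alpha> (idx t)" by auto
      then have "z = g (\<alpha> (idx t))" using gi by metis
      then show False using that by blast
    qed
  qed
  have aa: "\<alpha> i = \<alpha> j \<longleftrightarrow> i = j" for i j using ia by (auto dest: injD)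
  have bb: "\<beta> i = \<beta> j \<longleftrightarrow> i = j" for i j using ib by (auto dest: injD)
  have id: "idx s = idx t \<longleftrightarrow> s = t" for s t using ii by (auto dest: injD)
  show "(g \<circ> u \<circ> inv g \<circ> u) (\<alpha> (idx (k,m,e))) = \<alpha> (idx (k,m, if k \<in> J then \<not>e else e))"
  proof (cases "k \<in> J")
    case True
    have "\<forall>t. \<alpha> (idx (k,m,\<not>e)) \<noteq> g (\<alpha> (idx t))"
    proof
      fix t show "\<alpha> (idx (k,m,\<not>e)) \<noteq> g (\<alpha> (idx t))"
        using True by (cases t) (auto simp: gd ab aa id)
    qed
    from key[OF this] True show ?thesis by (simp add: u1 gi)
  next
    case False
    have "inv g (\<alpha> (idx (k,m,\<not>e))) = \<alpha> (idx (k,m,\<not>e))"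
      using gd[of k m "\<not>e"] False ig by metis
    then show ?thesis using False by (simp add: u1 gd)
  qed
  show "(g \<circ> u \<circ> inv g \<circ> u) (\<beta> (idx (k,m,e))) = \<beta> (idx (k,m, if k \<in> J then \<not>e else e))"
  proof (cases "k \<in> J")
    case True
    have "inv g (\<beta> (idx (k,m,e))) = \<alpha> (idx (k,m,e))"
      using gd[of k m "e"] True ig by metis
    moreover have "u (\<beta> (idx (k,m,e))) = \<beta> (idx (k,m,e))" by (rule u2) (auto simp: ab[symmetric])
    ultimately show ?thesis using True by (simp add: u1 gd)
  next
    case False
    have "u (\<beta> (idx (k,m,e))) = \<beta> (idx (k,m,e))" by (rule u2) (auto simp: ab[symmetric])
    moreover have "\<forall>t. \<beta> (idx (k,m,e)) \<noteq> g (\<alpha> (idx t))"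
    proof
      fix t show "\<beta> (idx (k,m,e)) \<noteq> g (\<alpha> (idx t))"
        using False by (cases t) (auto simp: gd ab[symmetric] bb id)
    qed
    ultimately show ?thesis using False key by (simp add: gi)
  qed
  assume x: "x \<notin> range (\<alpha> \<circ> idx) \<union> range (\<beta> \<circ> idx)"
  then have "u x = x" using u2 by blast
  moreover have "\<forall>t. x \<noteq> g (\<alpha> (idx t))"
  proof
    fix t show "x \<noteq> g (\<alpha> (idx t))" using x by (cases t) (auto simp: gd)
  qed
  ultimately show "(g \<circ> u \<circ> inv g \<circ> u) x = x" using key by (simp add: gi)
qed

lemma W_char:
  fixes a :: "nat \<times> nat \<times> bool \<Rightarrow> 'a"
  assumes bs: "bij s" and ia: "inj a" and sa: "\<And>k j e. s (a (k,j,e)) = a (k, Suc j, e)"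
  and Ya: "\<And>k j e. Y (a (k,j,e)) = a (k,j,fl k e)" and ff: "\<And>k e. fl k (fl k e) = e"
  and Yx: "\<And>x. x \<notin> range a \<Longrightarrow> Y x = x"
  shows "(Y \<circ> s \<circ> Y \<circ> inv s) (a (k,0,e)) = a (k,0,fl k e)"
    "(Y \<circ> s \<circ> Y \<circ> inv s) (a (k,Suc j,e)) = a (k,Suc j,e)"
    "x \<notin> range a \<Longrightarrow> (Y \<circ> s \<circ> Y \<circ> inv s) x = x"
proof -
  have si: "s (inv s z) = z" for z using bs by (simp add: bij_is_surj surj_f_inv_f)
  have is': "inv s (s z) = z" for z using bs by (simp add: bij_is_inj)
  have aa: "a x = a y \<longleftrightarrow> x = y" for x y using ia by (auto dest: injD)
  have "inv s (a (k,0,e)) \<notin> range a"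
  proof
    assume "inv s (a (k,0,e)) \<in> range a"
    then obtain k' j' e' where "inv s (a (k,0,e)) = a (k',j',e')" by (metis surj_pair rangeE)
    then have "a (k,0,e) = a (k',Suc j',e')" using si sa by metis
    then show False by (simp add: aa)
  qed
  then show "(Y \<circ> s \<circ> Y \<circ> inv s) (a (k,0,e)) = a (k,0,fl k e)" using Yx si Ya by simp
  show "(Y \<circ> s \<circ> Y \<circ> inv s) (a (k,Suc j,e)) = a (k,Suc j,e)"
  proof -
    have "inv s (a (k,Suc j,e)) = a (k,j,e)" using is'[of "a (k,j,e)"] sa by metis
    then show ?thesis by (simp add: Ya sa ff)
  qed
  assume x: "x \<notin> range a"
  have "inv s x \<notin> range a"
  proof
    assume "inv s x \<in> range a"
    then obtain k' j' e' where "inv s x = a (k',j',e')" by (metis surj_pair rangeE)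
    then have "x = a (k',Suc j',e')" using si sa by metis
    then show False using x by blast
  qed
  then show "(Y \<circ> s \<circ> Y \<circ> inv s) x = x" using Yx x si by simp
qed

lemma F_char:
  fixes a :: "nat \<times> nat \<times> bool \<Rightarrow> 'a" and p :: "nat \<Rightarrow> bool \<Rightarrow> 'a"
  assumes b\<sigma>: "bij \<sigma>" and ip: "inj (\<lambda>(k,e). p k e)"
  and \<sigma>a: "\<And>k e. \<sigma> (a (k,0,e)) = p k e"
  and W0: "\<And>k e. W (a (k,0,e)) = a (k,0,fl k e)"
  and Wx: "\<And>y. y \<notin> range (\<lambda>(k,e). a (k,0,e)) \<Longrightarrow> W y = y"
  and fp: "\<And>k e. f (p k e) = p k (fl k e)"
  and fx: "\<And>x. x \<notin> range (\<lambda>(k,e). p k e) \<Longrightarrow> f x = x"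
  shows "f = \<sigma> \<circ> W \<circ> inv \<sigma>"
proof
  fix x
  have si: "\<sigma> (inv \<sigma> z) = z" for z using b\<sigma> by (simp add: bij_is_surj surj_f_inv_f)
  have is': "inv \<sigma> (\<sigma> z) = z" for z using b\<sigma> by (simp add: bij_is_inj)
  show "f x = (\<sigma> \<circ> W \<circ> inv \<sigma>) x"
  proof (cases "x \<in> range (\<lambda>(k,e). p k e)")
    case True
    then obtain k e where x: "x = p k e" by auto
    have "inv \<sigma> x = a (k,0,e)" using is' \<sigma>a x by metis
    then show ?thesis using x by (simp add: W0 \<sigma>a fp)
  next
    case False
    have "inv \<sigma> x \<notin> range (\<lambda>(k,e). a (k,0,e))"
    proof
      assume "inv \<sigma> x \<in> range (\<lambda>(k,e). a (k,0,e))"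
      then obtain k e where "inv \<sigma> x = a (k,0,e)" by auto
      then have "x = p k e" using si \<sigma>a by metis
      then show False using False by auto
    qed
    then show ?thesis using False fx Wx si by simp
  qed
qed

theorem lemma7p1:
  fixes G :: "('a::countable \<Rightarrow> 'a) set"
    and \<alpha> \<beta> :: "nat \<Rightarrow> 'a"
    and A0 :: "'a set set"
  assumes "infinite (UNIV :: 'a set)"
    and "is_subgroup G"
    and "inj \<alpha>" and "inj \<beta>" and "\<And>i j. \<alpha> i \<noteq> \<beta> j"
    and "\<And>\<gamma>. (\<forall>i. \<gamma> i \<in> {\<alpha> i, \<beta> i}) \<Longrightarrow> \<exists>g\<in>G. \<forall>i. \<gamma> i = g (\<alpha> i)"
    and "partition_on (UNIV :: 'a set) A0"
    and "infinite {X \<in> A0. card X = 1}"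
    and "infinite {X \<in> A0. card X = 2}"
    and "\<forall>X\<in>A0. card X = 1 \<or> card X = 2"
  shows "preceq (stab_part A0) G"
proof -
  note ia = assms(3) and ib = assms(4) and ab = assms(5) and hyp = assms(6) and part = assms(7)
  have aa: "\<alpha> i = \<alpha> j \<longleftrightarrow> i = j" for i j using ia by (auto dest: injD)
  have bb: "\<beta> i = \<beta> j \<longleftrightarrow> i = j" for i j using ib by (auto dest: injD)
  have ab': "\<beta> j \<noteq> \<alpha> i" for i j using ab by metis
  have cov: "\<Union>A0 = UNIV" and dis: "disjoint A0" using part by (auto simp: partition_on_def)
  define T2 where "T2 = {X \<in> A0. card X = 2}"
  have "T2 \<subseteq> Collect finite" unfolding T2_def by (auto intro: card_ge_0_finite)
  then have cT2: "countable T2" using countable_Collect_finite countable_subset by blast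
  define B where "B = from_nat_into T2"
  have bB: "bij_betw B UNIV T2" unfolding B_def using bij_betw_from_nat_into[OF cT2] assms(9) T2_def by simp
  have "\<forall>k. \<exists>x y. B k = {x,y} \<and> x \<noteq> y"
  proof
    fix k have "B k \<in> T2" using bB by (auto simp: bij_betw_def)
    then show "\<exists>x y. B k = {x,y} \<and> x \<noteq> y" unfolding T2_def by (simp add: card_2_iff)
  qed
  then obtain p1 p2 where p12: "\<And>k. B k = {p1 k, p2 k} \<and> p1 k \<noteq> p2 k" by metis
  define p where "p k e = (if e then p1 k else p2 k)" for k e
  have Bp: "B k = {p k True, p k False}" "p k True \<noteq> p k False" for k using p12 by (auto simp: p_def)
  have BA: "B k \<in> A0" for k using bB unfolding T2_def bij_betw_def by auto
  have Binj: "B k = B k' \<longleftrightarrow> k = k'" for k k' using bB by (auto simp: bij_betw_def dest: injD)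
  have Bdis: "k \<noteq> k' \<Longrightarrow> B k \<inter> B k' = {}" for k k'
    using disjointD[OF dis BA BA] Binj by blast
  have ip: "inj (\<lambda>(k,e). p k e)"
  proof (rule injI)
    fix x y :: "nat \<times> bool" assume h: "(\<lambda>(k,e). p k e) x = (\<lambda>(k,e). p k e) y"
    obtain k e k' e' where xy: "x = (k,e)" "y = (k',e')" by fastforce
    have "p k e \<in> B k" "p k' e' \<in> B k'" using Bp by (cases e; cases e'; auto)+
    then have "k = k'" using h xy Bdis by auto
    then show "x = y" using h xy Bp(2)[of k] by (cases e; cases e'; auto)
  qed
  have inf_p: "infinite (- range (\<lambda>(k,e). p k e))"
  proof
    assume fin: "finite (- range (\<lambda>(k,e). p k e))"
    have "{X \<in> A0. card X = 1} \<subseteq> (\<lambda>x. {x}) ` (- range (\<lambda>(k,e). p k e))"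
    proof
      fix X assume X: "X \<in> {X \<in> A0. card X = 1}"
      then obtain x where Xx: "X = {x}" by (auto simp: card_1_singleton_iff)
      have "x \<notin> range (\<lambda>(k,e). p k e)"
      proof
        assume "x \<in> range (\<lambda>(k,e). p k e)"
        then obtain k e where "x = p k e" by auto
        then have "x \<in> B k" using Bp by (cases e) auto
        then have "X = B k" using disjointD[OF dis, of X "B k"] X BA Xx by blast
        then show False using X Bp[of k] by auto
      qed
      then show "X \<in> (\<lambda>x. {x}) ` (- range (\<lambda>(k,e). p k e))" using Xx by blast
    qed
    then show False using fin assms(8) finite_surj by blast
  qed
  define idx :: "nat \<times> nat \<times> bool \<Rightarrow> nat" where "idx t = 2 * to_nat t" for t
  have ii: "inj idx" unfolding idx_def by (rule injI) simp
  have idd: "idx s = idx t \<longleftrightarrow> s = t" for s t using ii by (auto dest: injD)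
  define a :: "nat \<times> nat \<times> bool \<Rightarrow> 'a" where
    "a t = (case t of (k,j,e) \<Rightarrow> if even j then \<alpha> (idx (k, j div 2, e)) else \<beta> (idx (k, j div 2, e)))" for t
  have ainj: "inj a"
  proof (rule injI)
    fix x y assume h: "a x = a y"
    obtain k j e k' j' e' where xy: "x = (k,j,e)" "y = (k',j',e')" by (cases x, cases y) auto
    have jj: "j = j'" if "j div 2 = j' div 2" "even j \<longleftrightarrow> even j'"
      using that by (metis even_two_times_div_two odd_two_times_div_two_succ)
    show "x = y"
    proof (cases "even j")
      case True
      show ?thesis
      proof (cases "even j'")
        case True
        with \<open>even j\<close> h have "(k, j div 2, e) = (k', j' div 2, e')" unfolding xy a_def by (simp add: aa idd)
        then show ?thesis using jj \<open>even j\<close> True xy by auto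
      next
        case False
        with \<open>even j\<close> h show ?thesis unfolding xy a_def by (simp add: ab)
      qed
    next
      case False
      show ?thesis
      proof (cases "even j'")
        case True
        with \<open>odd j\<close> h show ?thesis unfolding xy a_def by (simp add: ab')
      next
        case False
        with \<open>odd j\<close> h have "(k, j div 2, e) = (k', j' div 2, e')" unfolding xy a_def by (simp add: bb idd)
        then show ?thesis using jj \<open>odd j\<close> False xy by auto
      qed
    qed
  qed
  have ra: "range a = range (\<alpha> \<circ> idx) \<union> range (\<beta> \<circ> idx)"
  proof
    show "range a \<subseteq> range (\<alpha> \<circ> idx) \<union> range (\<beta> \<circ> idx)" by (auto simp: a_def split: prod.splits)
    show "range (\<alpha> \<circ> idx) \<union> range (\<beta> \<circ> idx) \<subseteq> range a"
    proof
      fix x assume "x \<in> range (\<alpha> \<circ> idx) \<union> range (\<beta> \<circ> idx)"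
      then obtain k m e where "x = \<alpha> (idx (k,m,e)) \<or> x = \<beta> (idx (k,m,e))" by (auto simp: image_iff)
      then have "x = a (k, 2*m, e) \<or> x = a (k, 2*m+1, e)" by (auto simp: a_def)
      then show "x \<in> range a" by blast
    qed
  qed
  have inf_a: "infinite (- range a)"
  proof -
    have odd_ne: "Suc (2*n) \<noteq> 2*(m::nat)" for n m by presburger
    have "range (\<lambda>n. \<alpha> (2*n+1)) \<subseteq> - range a"
      unfolding ra by (auto simp: aa ab idx_def odd_ne)
    moreover have "infinite (range (\<lambda>n. \<alpha> (2*n+1)))"
      by (rule range_inj_infinite) (auto intro!: injI simp: aa)
    ultimately show ?thesis using finite_subset by blast
  qed
  define \<phi> :: "nat \<times> nat \<times> bool \<Rightarrow> nat \<times> nat \<times> bool" where "\<phi> t = (case t of (k,m,e) \<Rightarrow> (k,m,\<not>e))" for t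
  have iai: "inj (\<alpha> \<circ> idx)" using ia ii inj_compose by blast
  define u where "u = (\<lambda>x. if x \<in> range (\<alpha> \<circ> idx) then (\<alpha> \<circ> idx) (\<phi> (inv (\<alpha> \<circ> idx) x)) else x)"
  have \<phi>\<phi>: "\<phi> (\<phi> t) = t" for t by (cases t) (simp add: \<phi>_def)
  have bu: "bij u" unfolding u_def by (rule swap_perm(1)[OF iai \<phi>\<phi>])
  have "u ((\<alpha> \<circ> idx) t) = (\<alpha> \<circ> idx) (\<phi> t)" for t unfolding u_def using inv_f_f[OF iai, of t] by simp
  then have u1: "u (\<alpha> (idx (k,m,e))) = \<alpha> (idx (k,m,\<not>e))" for k m e
    using \<open>u ((\<alpha> \<circ> idx) (k,m,e)) = _\<close> by (simp add: \<phi>_def)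
  have u2: "x \<notin> range (\<alpha> \<circ> idx) \<Longrightarrow> u x = x" for x unfolding u_def by simp
  have "inj (\<lambda>(k::nat,j::nat,e::bool). (k, Suc j, e))" by (auto simp: inj_def)
  then have ish: "inj (a \<circ> (\<lambda>(k,j,e). (k, Suc j, e)))"
    using ainj by (rule inj_compose[rotated])
  have "- range a \<subseteq> - range (a \<circ> (\<lambda>(k,j,e). (k, Suc j, e)))" by auto
  then have "infinite (- range (a \<circ> (\<lambda>(k,j,e). (k, Suc j, e))))"
    using inf_a by (rule infinite_super)
  then obtain s where bs: "bij s" and sa0: "\<forall>b. s (a b) = (a \<circ> (\<lambda>(k,j,e). (k, Suc j, e))) b"
    using ext_perm[OF ainj ish inf_a] by blast
  have sa: "s (a (k,j,e)) = a (k, Suc j, e)" for k j e using sa0 by auto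
  have iq: "inj (\<lambda>(k,e). a (k,0,e))"
  proof (rule injI)
    fix x y :: "nat \<times> bool" assume "(\<lambda>(k,e). a (k,0,e)) x = (\<lambda>(k,e). a (k,0,e)) y"
    then have "a (fst x, 0, snd x) = a (fst y, 0, snd y)" by (simp add: case_prod_beta)
    then have "(fst x, 0::nat, snd x) = (fst y, 0, snd y)" by (rule injD[OF ainj])
    then show "x = y" by (simp add: prod_eq_iff)
  qed
  have "- range a \<subseteq> - range (\<lambda>(k,e). a (k,0,e))" by auto
  then have "infinite (- range (\<lambda>(k,e). a (k,0,e)))"
    using inf_a by (rule infinite_super)
  then obtain \<sigma> where b\<sigma>: "bij \<sigma>" and \<sigma>a0: "\<forall>b. \<sigma> ((\<lambda>(k,e). a (k,0,e)) b) = (\<lambda>(k,e). p k e) b"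
    using ext_perm[OF iq ip _ inf_p] by blast
  have \<sigma>a: "\<sigma> (a (k,0,e)) = p k e" for k e using \<sigma>a0 by auto
  show ?thesis unfolding preceq_def
  proof (intro exI conjI)
    show "finite {u, s, \<sigma>}" by simp
    show "{u, s, \<sigma>} \<subseteq> Sym" using bu bs b\<sigma> by (simp add: Sym_def)
    show "stab_part A0 \<subseteq> gen (G \<union> {u, s, \<sigma>})"
    proof
      fix f assume "f \<in> stab_part A0"
      then have bf: "bij f" and fX: "\<And>X. X \<in> A0 \<Longrightarrow> f ` X = X" by (auto simp: stab_part_def Sym_def)
      have fi: "f x = f y \<longleftrightarrow> x = y" for x y using bf by (auto simp: bij_def dest: injD)
      define J where "J = {k. f (p k True) \<noteq> p k True}"
      define fl where "fl k e = (if k \<in> J then \<not>e else e)" for k e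
      have fp: "f (p k e) = p k (fl k e)" for k e
      proof -
        have "f ` {p k True, p k False} = {p k True, p k False}" using fX[OF BA[of k]] Bp by simp
        then have "f (p k True) \<in> {p k True, p k False}" "f (p k False) \<in> {p k True, p k False}" by blast+
        then show ?thesis using Bp(2)[of k] fi[of "p k True" "p k False"] unfolding fl_def J_def
          by (cases e) auto
      qed
      have fx: "f x = x" if x: "x \<notin> range (\<lambda>(k,e). p k e)" for x
      proof -
        obtain X where X: "X \<in> A0" "x \<in> X" using cov by blast
        show ?thesis
        proof (cases "card X = 1")
          case True
          then have "X = {x}" using X by (auto simp: card_1_singleton_iff)
          then show ?thesis using fX[OF X(1)] by simp
        next
          case False
          then have "X \<in> T2" using X assms(10) by (auto simp: T2_def)
          then obtain k where "X = B k" using bB by (auto simp: bij_betw_def)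
          then have "x \<in> range (\<lambda>(k,e). p k e)" using X Bp[of k] by (auto simp: image_iff)
          then show ?thesis using x by blast
        qed
      qed
      define \<gamma> where "\<gamma> i = (if i \<in> range idx \<and> fst (inv idx i) \<in> J then \<beta> i else \<alpha> i)" for i
      have "\<forall>i. \<gamma> i \<in> {\<alpha> i, \<beta> i}" by (simp add: \<gamma>_def)
      then obtain g where gG: "g \<in> G" and gg: "\<forall>i. \<gamma> i = g (\<alpha> i)"
        using hyp by blast
      have bg: "bij g" using gG assms(2) by (auto simp: is_subgroup_def Sym_def)
      have gd: "g (\<alpha> (idx (k,m,e))) = (if k \<in> J then \<beta> (idx (k,m,e)) else \<alpha> (idx (k,m,e)))" for k m e
        using gg[rule_format, of "idx (k,m,e)"] ii by (simp add: \<gamma>_def)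
      note Yc = Y_char[where g=g and u=u and \<alpha>=\<alpha> and \<beta>=\<beta> and idx=idx and J=J, OF bg ia ib ab ii gd u1 u2]
      define Y where "Y = g \<circ> u \<circ> inv g \<circ> u"
      have Ya: "Y (a (k,j,e)) = a (k,j,fl k e)" for k j e
        using Yc(1,2)[of k "j div 2" e] by (simp add: Y_def a_def fl_def)
      have Yx: "x \<notin> range a \<Longrightarrow> Y x = x" for x using Yc(3)[of x] by (simp add: Y_def ra)
      have ff: "fl k (fl k e) = e" for k e by (simp add: fl_def)
      note Wc = W_char[where s=s and a=a and Y=Y and fl=fl, OF bs ainj sa Ya ff Yx]
      define W where "W = Y \<circ> s \<circ> Y \<circ> inv s"
      have W0: "W (a (k,0,e)) = a (k,0,fl k e)" for k e using Wc(1) by (simp add: W_def)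
      have Wx: "W y = y" if y: "y \<notin> range (\<lambda>(k,e). a (k,0,e))" for y
      proof (cases "y \<in> range a")
        case True
        then obtain k j e where ya: "y = a (k,j,e)" by (metis surj_pair rangeE)
        have "j \<noteq> 0"
        proof
          assume "j = 0"
          then have "y = (\<lambda>(k,e). a (k,0,e)) (k,e)" using ya by simp
          then show False using y by blast
        qed
        then obtain j' where "j = Suc j'" using not0_implies_Suc by blast
        then show ?thesis using Wc(2) ya by (simp add: W_def)
      next
        case False
        then show ?thesis using Wc(3) by (simp add: W_def)
      qed
      have feq: "f = \<sigma> \<circ> W \<circ> inv \<sigma>" by (rule F_char[where \<sigma>=\<sigma> and a=a and p=p and W=W and fl=fl and f=f, OF b\<sigma> ip \<sigma>a W0 Wx fp fx])
      show "f \<in> gen (G \<union> {u, s, \<sigma>})" unfolding gen_def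
      proof
        fix H assume "H \<in> {H. is_subgroup H \<and> G \<union> {u, s, \<sigma>} \<subseteq> H}"
        then have sH: "is_subgroup H" and mem: "g \<in> H" "u \<in> H" "s \<in> H" "\<sigma> \<in> H" using gG by auto
        have c1: "x \<circ> y \<in> H" if "x \<in> H" "y \<in> H" for x y using subgroup_closed[OF sH that] by blast
        have c2: "inv x \<in> H" if "x \<in> H" for x using subgroup_closed[OF sH that that] by blast
        show "f \<in> H" unfolding feq W_def Y_def by (intro c1 c2 mem)
      qed
    qed
  qed
qed

end
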